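(* Let $n=\prod_{j=1}^k p_j^{a_j}$ be the factorization of $n$ into powers of distinct primes, let $\omega\in(\mathbb{Z}/n\mathbb{Z})^\times$ and $r\in\mathbb{Z}/n\mathbb{Z}$, and let $X=\langle\omega\rangle r$. For each $j$, let $\psi_j:\mathbb{Z}/n\mathbb{Z}\to\mathbb{Z}/p_j^{a_j}\mathbb{Z}$ be the natural reduction homomorphism, let $x_j\in\mathbb{Z}/p_j^{a_j}\mathbb{Z}$ be the multiplicative inverse of $n/p_j^{a_j}$ modulo $p_j^{a_j}$, and let $X_j=\langle\psi_j(\omega)\rangle\, x_j\psi_j(r)\subseteq\mathbb{Z}/p_j^{a_j}\mathbb{Z}$. If the orbit sizes $|X_1|,\dots,|X_k|$ are pairwise coprime, then for every $y\in\mathbb{Z}/n\mathbb{Z}$, $$\sigma_X(y)=\prod_{j=1}^k \sigma_{X_j}(\psi_j(y)),$$ where $\sigma_{X_j}$ is the supercharacter of $\mathbb{Z}/p_j^{a_j}\mathbb{Z}$ attached to $X_j$.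
   Context: Write $e(\theta)=\exp(2\pi i\theta)$. For a positive integer $m$, a subgroup $A$ of $(\mathbb{Z}/m\mathbb{Z})^\times$ and $r\in\mathbb{Z}/m\mathbb{Z}$, let $X=Ar=\{ar:a\in A\}$ and define $\sigma_X:\mathbb{Z}/m\mathbb{Z}\to\mathbb{C}$ by $\sigma_X(y)=\sum_{x\in X}e\left(\frac{xy}{m}\right)$. Here $\langle\omega\rangle$ denotes the cyclic subgroup generated by $\omega$. *)

theory Defs
  imports "HOL-Analysis.Analysis" "HOL-Number_Theory.Number_Theory"
begin

definition e :: "real \<Rightarrow> complex" where
  "e \<theta> = exp (2 * of_real pi * \<i> * of_real \<theta>)"

text \<open>Elements of Z/mZ are represented by integers in {0..<m}.
  The orbit <w> r = {w^k r mod m | k}.\<close>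
definition cyc_orbit :: "nat \<Rightarrow> int \<Rightarrow> int \<Rightarrow> int set" where
  "cyc_orbit m w r = {(w ^ k * r) mod int m | k. True}"

definition sigma :: "nat \<Rightarrow> int set \<Rightarrow> int \<Rightarrow> complex" where
  "sigma m X y = (\<Sum>x\<in>X. e (of_int (x * y) / of_nat m))"

definition ppart :: "nat \<Rightarrow> nat \<Rightarrow> nat" where
  "ppart n p = p ^ multiplicity p n"

definition local_orbit :: "nat \<Rightarrow> int \<Rightarrow> int \<Rightarrow> int \<Rightarrow> nat \<Rightarrow> int set" where
  "local_orbit n w r xp p =
     cyc_orbit (ppart n p) (w mod int (ppart n p)) ((xp * (r mod int (ppart n p))) mod int (ppart n p))"

end

theory Submission
  imports Defs
begin


lemma cong_prod_int:
  fixes m :: "'b \<Rightarrow> int"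
  assumes "finite A" "\<forall>i\<in>A. \<forall>j\<in>A. i \<noteq> j \<longrightarrow> coprime (m i) (m j)"
    "\<forall>i\<in>A. [a = b] (mod m i)"
  shows "[a = b] (mod prod m A)"
  using assms
proof (induction A rule: finite_induct)
  case empty then show ?case by simp
next
  case (insert x F)
  have "coprime (m x) (prod m F)"
    by (rule prod_coprime_right) (use insert in auto)
  moreover have "[a = b] (mod prod m F)" using insert by auto
  ultimately show ?case using insert by (simp add: coprime_cong_mult)
qed

lemma cong_prod_nat:
  fixes m :: "'b \<Rightarrow> nat"
  assumes "finite A" "\<forall>i\<in>A. \<forall>j\<in>A. i \<noteq> j \<longrightarrow> coprime (m i) (m j)"
    "\<forall>i\<in>A. [a = b] (mod m i)"
  shows "[a = b] (mod prod m A)"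
proof -
  have "[int a = int b] (mod prod (\<lambda>i. int (m i)) A)"
    using assms by (intro cong_prod_int) (auto simp: cong_int_iff)
  then show ?thesis by (simp add: cong_int_iff flip: of_nat_prod)
qed

lemma e_add: "e (a + b) = e a * e b"
  unfolding e_def by (simp add: distrib_left exp_add)

lemma e_int: "e (of_int t) = 1"
proof -
  have "e (of_int t) = exp ((2 * of_int t * pi) * \<i>)"
    unfolding e_def by (simp add: ac_simps)
  also have "\<dots> = 1" by (rule exp_integer_2pi) simp
  finally show ?thesis .
qed

lemma e_sum: "finite I \<Longrightarrow> e (sum f I) = (\<Prod>i\<in>I. e (f i))"
  unfolding e_def by (simp add: sum_distrib_left exp_sum)

lemma e_cong:
  assumes "m > 0" "[a = b] (mod int m)"
  shows "e (of_int a / real m) = e (of_int b / real m)"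
proof -
  obtain t where t: "a = b + int m * t"
    using assms(2) by (metis cong_iff_lin cong_sym)
  have "of_int a / real m = of_int b / real m + of_int t"
    using assms(1) by (simp add: t field_simps)
  then show ?thesis by (simp add: e_add e_int)
qed



lemma orbit_shift:
  fixes u z :: int and m :: nat
  assumes "coprime u (int m)"
  shows "(u^(j+k)*z) mod int m = (u^(j+k')*z) mod int m \<longleftrightarrow> (u^k*z) mod int m = (u^k'*z) mod int m"
proof -
  have c: "coprime (u^j) (int m)" using assms by simp
  have "(u^(j+k)*z) mod int m = (u^(j+k')*z) mod int m \<longleftrightarrow> [u^j * (u^k*z) = u^j*(u^k'*z)] (mod int m)"
    by (simp add: cong_def power_add ac_simps)
  also have "\<dots> \<longleftrightarrow> [u^k*z = u^k'*z] (mod int m)" using cong_mult_lcancel[OF c] by blast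
  finally show ?thesis by (simp add: cong_def)
qed

lemma orbit_period:
  fixes u z :: int and m :: nat
  assumes m: "m > 0" and cop: "coprime u (int m)"
  defines "h \<equiv> \<lambda>k::nat. (u^k*z) mod int m"
  shows "finite (range h)" "card (range h) > 0"
    "\<And>k k'. h k = h k' \<longleftrightarrow> [k = k'] (mod card (range h))"
proof -
  have sh: "h (j+k) = h (j+k') \<longleftrightarrow> h k = h k'" for j k k'
    unfolding h_def by (rule orbit_shift[OF cop])
  have rng: "range h \<subseteq> {0..<int m}" using m unfolding h_def by auto
  show fin: "finite (range h)" using rng finite_subset by blast
  have "\<not> inj_on h {0..m}"
  proof
    assume "inj_on h {0..m}"
    then have "card (h ` {0..m}) = m + 1" by (simp add: card_image)
    moreover have "card (h ` {0..m}) \<le> card {0..<int m}"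
      using rng by (intro card_mono) auto
    ultimately show False by simp
  qed
  then obtain i j where ij: "i \<in> {0..m}" "j \<in> {0..m}" "i \<noteq> j" "h i = h j"
    unfolding inj_on_def by blast
  have "\<exists>d. 0 < d \<and> h d = h 0"
  proof (cases "i < j")
    case True
    then have "h (i + (j - i)) = h (i + 0)" using ij by simp
    then have "h (j - i) = h 0" using sh by blast
    then show ?thesis using True by (intro exI[of _ "j-i"]) auto
  next
    case False
    then have "h (j + (i - j)) = h (j + 0)" using ij False by simp
    then have "h (i - j) = h 0" using sh by blast
    then show ?thesis using False ij by (intro exI[of _ "i-j"]) auto
  qed
  define d where "d = (LEAST d. 0 < d \<and> h d = h 0)"
  have d: "0 < d" "h d = h 0"
    using LeastI_ex[OF \<open>\<exists>d. 0 < d \<and> h d = h 0\<close>] unfolding d_def by auto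
  have dmin: "0 < s \<Longrightarrow> s < d \<Longrightarrow> h s \<noteq> h 0" for s
    using not_less_Least[of s "\<lambda>d. 0 < d \<and> h d = h 0"] unfolding d_def by blast
  have per: "h (k + d*t) = h k" for k t
  proof (induction t)
    case 0 then show ?case by simp
  next
    case (Suc t)
    have s1: "h (k + d*t + d) = h (k + d*t + 0)" using sh d(2) by presburger
    have eq: "k + d * Suc t = k + d*t + d" by simp
    have "h (k + d * Suc t) = h (k + d*t + d)" by (simp only: eq)
    also have "\<dots> = h (k + d*t + 0)" by (rule s1)
    also have "\<dots> = h k" using Suc.IH by simp
    finally show ?case .
  qed
  have modd: "h k = h (k mod d)" for k
    using per[of "k mod d" "k div d"] by (simp add: add.commute)
  have le: "h k = h k' \<longleftrightarrow> [k = k'] (mod d)" if kk: "k \<le> k'" for k k'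
  proof
    assume hk: "h k = h k'"
    define s where "s = k' - k"
    have "h (k + s) = h (k + 0)" using hk that by (simp add: s_def)
    then have "h s = h 0" using sh by blast
    then have "h (s mod d) = h 0" using modd by simp
    then have "s mod d = 0" using dmin[of "s mod d"] d(1) by (meson mod_less_divisor neq0_conv)
    then obtain t where t: "s = d*t" by (metis mod_0_imp_dvd dvdE)
    have "k' = k + d*t" using that t unfolding s_def by simp
    then show "[k = k'] (mod d)" by (simp add: cong_def)
  next
    assume "[k = k'] (mod d)"
    then have "[k' = k] (mod d)" by (rule cong_sym)
    then obtain t where "k' = t*d + k" using cong_le_nat[OF kk] by blast
    then have "k' = k + d*t" by simp
    then show "h k = h k'" using per by simp
  qed
  have iff: "h k = h k' \<longleftrightarrow> [k = k'] (mod d)" for k k'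
  proof (cases "k \<le> k'")
    case True then show ?thesis using le by blast
  next
    case False then show ?thesis using le[of k' k] cong_sym_eq[of k k' d] by auto
  qed
  have "range h = h ` {0..<d}"
  proof
    show "range h \<subseteq> h ` {0..<d}"
    proof
      fix v assume "v \<in> range h"
      then obtain k where "v = h k" by blast
      then have "v = h (k mod d)" using modd by simp
      moreover have "k mod d \<in> {0..<d}" using d(1) by simp
      ultimately show "v \<in> h ` {0..<d}" by blast
    qed
  qed auto
  moreover have "inj_on h {0..<d}"
    unfolding inj_on_def using iff by (auto simp: cong_def)
  ultimately have cd: "card (range h) = d" by (simp add: card_image)
  show "card (range h) > 0" using cd d by simp
  show "h k = h k' \<longleftrightarrow> [k = k'] (mod card (range h))" for k k'
    using iff cd by simp
qed



theorem theorem2p1: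
  fixes n :: nat and \<omega> r y :: int and x :: "nat \<Rightarrow> int"
  assumes "n > 0"
    and "\<omega> \<in> {0..<int n}" and "coprime \<omega> (int n)"
    and "r \<in> {0..<int n}"
    and "\<forall>p\<in>prime_factors n. x p \<in> {0..<int (ppart n p)} \<and>
           [x p * int (n div ppart n p) = 1] (mod int (ppart n p))"
    and "\<forall>p\<in>prime_factors n. \<forall>p'\<in>prime_factors n. p \<noteq> p' \<longrightarrow>
           coprime (card (local_orbit n \<omega> r (x p) p)) (card (local_orbit n \<omega> r (x p') p'))"
    and "y \<in> {0..<int n}"
  shows "sigma n (cyc_orbit n \<omega> r) y =
    (\<Prod>p\<in>prime_factors n. sigma (ppart n p) (local_orbit n \<omega> r (x p) p) (y mod int (ppart n p)))"
proof -
  define P where "P = prime_factors n"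
  define q where "q = (\<lambda>p. ppart n p)"
  define X where "X = (\<lambda>p. local_orbit n \<omega> r (x p) p)"
  define L where "L = (\<lambda>p. card (X p))"
  define z where "z = (\<lambda>p. (x p * (r mod int (q p))) mod int (q p))"
  define u where "u = (\<lambda>p. \<omega> mod int (q p))"
  define g where "g = (\<lambda>p (k::nat). (u p ^ k * z p) mod int (q p))"
  define f where "f = (\<lambda>k::nat. (\<omega>^k * r) mod int n)"
  define LL where "LL = (\<Prod>p\<in>P. L p)"
  have finP: "finite P" unfolding P_def by simp
  have primeP: "prime p" if "p \<in> P" for p using that unfolding P_def by auto
  have qpos: "q p > 0" if "p \<in> P" for p
    using primeP[OF that] by (simp add: q_def ppart_def prime_gt_0_nat)
  have qdvd: "q p dvd n" for p unfolding q_def ppart_def by (rule multiplicity_dvd)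
  have qdvdi: "int (q p) dvd int n" for p using qdvd[of p] by simp
  have nprod: "n = (\<Prod>p\<in>P. q p)"
    using prod_prime_factors[of n] assms(1) by (simp add: P_def q_def ppart_def)
  have nprodi: "int n = (\<Prod>p\<in>P. int (q p))" using nprod by (metis of_nat_prod)
  have qcop: "\<forall>p\<in>P. \<forall>p'\<in>P. p \<noteq> p' \<longrightarrow> coprime (q p) (q p')"
    using primeP by (auto simp: q_def ppart_def primes_coprime)
  have qcopi: "\<forall>p\<in>P. \<forall>p'\<in>P. p \<noteq> p' \<longrightarrow> coprime (int (q p)) (int (q p'))"
    using qcop by simp
  have xcong: "[x p * int (n div q p) = 1] (mod int (q p))" if "p \<in> P" for p
    using assms(5) that by (simp add: P_def q_def)
  have xcop: "coprime (x p) (int (q p))" if "p \<in> P" for p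
  proof -
    have "coprime (x p * int (n div q p)) (int (q p))"
      using cong_imp_coprime[OF cong_sym[OF xcong[OF that]]] by simp
    then show ?thesis by simp
  qed
  have ucop: "coprime (u p) (int (q p))" if "p \<in> P" for p
  proof -
    have "coprime \<omega> (int (q p))" using coprime_divisors[OF _ qdvdi assms(3)] by simp
    then show ?thesis using qpos[OF that] by (simp add: u_def)
  qed
  have Xeq: "X p = range (g p)" for p
    unfolding X_def local_orbit_def cyc_orbit_def g_def u_def z_def q_def by auto
  have orb: "finite (X p) \<and> L p > 0 \<and> (\<forall>k k'. g p k = g p k' \<longleftrightarrow> [k = k'] (mod L p))"
    if "p \<in> P" for p
  proof -
    have hg: "(\<lambda>k::nat. (u p ^ k * z p) mod int (q p)) = g p" unfolding g_def by simp
    note o = orbit_period[OF qpos[OF that] ucop[OF that], where z = "z p", unfolded hg]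
    show ?thesis using o unfolding L_def Xeq by (simp add: g_def)
  qed
  have Lcop: "\<forall>p\<in>P. \<forall>p'\<in>P. p \<noteq> p' \<longrightarrow> coprime (L p) (L p')"
    using assms(6) by (simp add: L_def X_def P_def)
  have LLpos: "LL > 0" using orb finP by (simp add: LL_def)
  have g_alt: "g p k = (x p * (\<omega>^k * r)) mod int (q p)" for p k
  proof -
    have a1: "[(\<omega> mod int (q p))^k = \<omega>^k] (mod int (q p))" by (simp add: cong_def power_mod)
    have a2: "[(x p * (r mod int (q p))) mod int (q p) = x p * r] (mod int (q p))"
      by (simp add: cong_def mod_mult_right_eq)
    have "[(\<omega> mod int (q p))^k * ((x p * (r mod int (q p))) mod int (q p)) = \<omega>^k * (x p * r)] (mod int (q p))"
      by (rule cong_mult[OF a1 a2])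
    then show ?thesis unfolding g_def u_def z_def cong_def by (simp add: ac_simps)
  qed
  have gcong: "g p k = g p k' \<longleftrightarrow> [\<omega>^k*r = \<omega>^k'*r] (mod int (q p))" if "p \<in> P" for p k k'
  proof -
    have "g p k = g p k' \<longleftrightarrow> [x p * (\<omega>^k*r) = x p * (\<omega>^k'*r)] (mod int (q p))"
      by (simp add: g_alt cong_def)
    also have "\<dots> \<longleftrightarrow> [\<omega>^k*r = \<omega>^k'*r] (mod int (q p))"
      by (rule cong_mult_lcancel[OF xcop[OF that]])
    finally show ?thesis .
  qed
  have fg: "f k = f k' \<longleftrightarrow> (\<forall>p\<in>P. g p k = g p k')" for k k'
  proof -
    have "f k = f k' \<longleftrightarrow> [\<omega>^k*r = \<omega>^k'*r] (mod int n)" by (simp add: f_def cong_def)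
    also have "\<dots> \<longleftrightarrow> (\<forall>p\<in>P. [\<omega>^k*r = \<omega>^k'*r] (mod int (q p)))"
    proof
      assume "[\<omega>^k*r = \<omega>^k'*r] (mod int n)"
      then show "\<forall>p\<in>P. [\<omega>^k*r = \<omega>^k'*r] (mod int (q p))"
        using qdvdi cong_dvd_modulus by blast
    next
      assume "\<forall>p\<in>P. [\<omega>^k*r = \<omega>^k'*r] (mod int (q p))"
      then show "[\<omega>^k*r = \<omega>^k'*r] (mod int n)"
        using cong_prod_int[OF finP qcopi] nprodi by simp
    qed
    also have "\<dots> \<longleftrightarrow> (\<forall>p\<in>P. g p k = g p k')" using gcong by auto
    finally show ?thesis .
  qed
  have gLL: "(\<forall>p\<in>P. g p k = g p k') \<longleftrightarrow> [k = k'] (mod LL)" for k k'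
  proof
    assume "\<forall>p\<in>P. g p k = g p k'"
    then have "\<forall>p\<in>P. [k = k'] (mod L p)" using orb by blast
    then show "[k = k'] (mod LL)" unfolding LL_def by (rule cong_prod_nat[OF finP Lcop])
  next
    assume c: "[k = k'] (mod LL)"
    show "\<forall>p\<in>P. g p k = g p k'"
    proof
      fix p assume pP: "p \<in> P"
      have "L p dvd LL" unfolding LL_def using finP pP by (rule dvd_prodI)
      then have "[k = k'] (mod L p)" using c cong_dvd_modulus_nat by blast
      then show "g p k = g p k'" using orb[OF pP] by blast
    qed
  qed
  have fLL: "f k = f k' \<longleftrightarrow> [k = k'] (mod LL)" for k k' using fg gLL by blast
  have modLL: "[k mod LL = k] (mod LL)" for k by (simp add: cong_def)
  have bijf: "bij_betw f {0..<LL} (cyc_orbit n \<omega> r)"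
  proof (rule bij_betw_imageI)
    show "inj_on f {0..<LL}"
      unfolding inj_on_def using fLL cong_less_modulus_unique_nat by auto
    have "cyc_orbit n \<omega> r = range f" unfolding cyc_orbit_def f_def by auto
    also have "\<dots> = f ` {0..<LL}"
    proof
      show "range f \<subseteq> f ` {0..<LL}"
      proof
        fix v assume "v \<in> range f"
        then obtain k where k: "v = f k" by blast
        have "f (k mod LL) = f k" using fLL modLL by blast
        moreover have "k mod LL \<in> {0..<LL}" using LLpos by simp
        ultimately show "v \<in> f ` {0..<LL}" using k by (metis image_eqI)
      qed
    qed auto
    finally show "f ` {0..<LL} = cyc_orbit n \<omega> r" by simp
  qed
  define \<Phi> where "\<Phi> = (\<lambda>k. restrict (\<lambda>p. g p k) P)"
  have bijP: "bij_betw \<Phi> {0..<LL} (PiE P X)"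
  proof (rule bij_betw_imageI)
    show "inj_on \<Phi> {0..<LL}"
    proof (rule inj_onI)
      fix k k' assume kk: "k \<in> {0..<LL}" "k' \<in> {0..<LL}" "\<Phi> k = \<Phi> k'"
      have "\<forall>p\<in>P. g p k = g p k'"
      proof
        fix p assume "p \<in> P"
        then show "g p k = g p k'" using fun_cong[OF kk(3), of p] by (simp add: \<Phi>_def)
      qed
      then have "[k = k'] (mod LL)" using gLL by blast
      then show "k = k'" using kk cong_less_modulus_unique_nat by auto
    qed
    show "\<Phi> ` {0..<LL} = PiE P X"
    proof
      show "\<Phi> ` {0..<LL} \<subseteq> PiE P X"
        by (auto simp: \<Phi>_def restrict_PiE_iff Xeq)
    next
      show "PiE P X \<subseteq> \<Phi> ` {0..<LL}"
      proof
        fix hh assume hh: "hh \<in> PiE P X"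
        have "\<forall>p\<in>P. \<exists>k. hh p = g p k"
        proof
          fix p assume "p \<in> P"
          then have "hh p \<in> X p" using hh by (simp add: PiE_mem)
          then show "\<exists>k. hh p = g p k" unfolding Xeq by blast
        qed
        then obtain kk where kk: "\<forall>p\<in>P. hh p = g p (kk p)" by metis
        obtain K where K: "\<forall>p\<in>P. [K = kk p] (mod L p)"
          using chinese_remainder_nat[OF finP Lcop, of kk] by blast
        have "\<Phi> (K mod LL) = restrict hh P"
          unfolding \<Phi>_def
        proof (rule restrict_ext)
          fix p assume pP: "p \<in> P"
          have "L p dvd LL" unfolding LL_def using finP pP by (rule dvd_prodI)
          then have "[K mod LL = K] (mod L p)" using modLL cong_dvd_modulus_nat by blast
          then have "[K mod LL = kk p] (mod L p)" using K pP cong_trans by blast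
          then show "g p (K mod LL) = hh p" using orb[OF pP] kk pP by auto
        qed
        then have "\<Phi> (K mod LL) = hh" using hh by simp
        moreover have "K mod LL \<in> {0..<LL}" using LLpos by simp
        ultimately show "hh \<in> \<Phi> ` {0..<LL}" by (metis imageI)
      qed
    qed
  qed
  define E where "E = (\<lambda>p (v::int). e (of_int (v * (y mod int (q p))) / of_nat (q p)))"
  have point: "e (of_int (f k * y) / of_nat n) = (\<Prod>p\<in>P. E p (g p k))" for k
  proof -
    define c where "c = f k * y"
    define s where "s = (\<Sum>p\<in>P. x p * int (n div q p))"
    have s1: "[s = 1] (mod int n)"
    proof -
      have "[s = 1] (mod int (q p'))" if p'P: "p' \<in> P" for p'
      proof -
        have "s = x p' * int (n div q p') + (\<Sum>p\<in>P-{p'}. x p * int (n div q p))"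
          unfolding s_def using finP p'P by (simp add: sum.remove)
        moreover have "int (q p') dvd (\<Sum>p\<in>P-{p'}. x p * int (n div q p))"
        proof (rule dvd_sum)
          fix p assume pP: "p \<in> P - {p'}"
          have cp: "coprime (q p') (q p)" using qcop pP p'P by auto
          have "q p' dvd q p * (n div q p)" using qdvd[of p'] qdvd[of p] by simp
          then have "q p' dvd n div q p" using cp coprime_dvd_mult_right_iff by blast
          then show "int (q p') dvd x p * int (n div q p)" by simp
        qed
        then have "[(\<Sum>p\<in>P-{p'}. x p * int (n div q p)) = 0] (mod int (q p'))"
          by (simp add: cong_0_iff)
        ultimately show ?thesis using cong_add[OF xcong[OF p'P]] by fastforce
      qed
      then show ?thesis using cong_prod_int[OF finP qcopi] nprodi by simp
    qed
    have "[c * s = c * 1] (mod int n)" using s1 by (rule cong_scalar_left)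
    then have cs: "[c = c * s] (mod int n)" by (simp add: cong_sym)
    have "e (of_int c / real n) = e (of_int (c * s) / real n)"
      by (rule e_cong[OF assms(1) cs])
    also have "of_int (c * s) / real n = (\<Sum>p\<in>P. of_int (c * x p) / real (q p))"
    proof -
      have "of_int (c * s) / real n = (\<Sum>p\<in>P. of_int (c * x p) * real (n div q p) / real n)"
        unfolding s_def by (simp add: sum_distrib_left sum_divide_distrib mult.assoc)
      also have "\<dots> = (\<Sum>p\<in>P. of_int (c * x p) / real (q p))"
      proof (rule sum.cong)
        fix p assume pP: "p \<in> P"
        have "real (n div q p) = real n / real (q p)" by (rule real_of_nat_div[OF qdvd])
        then show "of_int (c * x p) * real (n div q p) / real n = of_int (c * x p) / real (q p)"
          using assms(1) qpos[OF pP] by simp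
      qed simp
      finally show ?thesis .
    qed
    also have "e (\<Sum>p\<in>P. of_int (c * x p) / real (q p)) = (\<Prod>p\<in>P. e (of_int (c * x p) / real (q p)))"
      by (rule e_sum[OF finP])
    also have "\<dots> = (\<Prod>p\<in>P. E p (g p k))"
    proof (rule prod.cong)
      fix p assume pP: "p \<in> P"
      have c1: "[f k = \<omega>^k*r] (mod int (q p))"
        by (simp add: f_def cong_def mod_mod_cancel[OF qdvdi])
      have c2: "[y mod int (q p) = y] (mod int (q p))" by (simp add: cong_def)
      have c3: "[g p k = x p * (\<omega>^k*r)] (mod int (q p))" by (simp add: g_alt cong_def)
      have "[c * x p = (x p * (\<omega>^k*r)) * y] (mod int (q p))"
        using cong_mult[OF cong_mult[OF c1 cong_refl[of y]] cong_refl[of "x p"]]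
        by (simp add: c_def ac_simps)
      moreover have "[g p k * (y mod int (q p)) = (x p * (\<omega>^k*r)) * y] (mod int (q p))"
        using cong_mult[OF c3 c2] .
      ultimately have "[c * x p = g p k * (y mod int (q p))] (mod int (q p))"
        by (meson cong_sym cong_trans)
      then show "e (of_int (c * x p) / real (q p)) = E p (g p k)"
        unfolding E_def by (rule e_cong[OF qpos[OF pP]])
    qed simp
    finally show ?thesis by (simp add: c_def)
  qed
  have "sigma n (cyc_orbit n \<omega> r) y = (\<Sum>k\<in>{0..<LL}. e (of_int (f k * y) / of_nat n))"
    unfolding sigma_def by (rule sum.reindex_bij_betw[OF bijf, symmetric])
  also have "\<dots> = (\<Sum>k\<in>{0..<LL}. \<Prod>p\<in>P. E p (\<Phi> k p))"
    using point by (intro sum.cong refl prod.cong) (auto simp: \<Phi>_def)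
  also have "\<dots> = (\<Sum>hh\<in>PiE P X. \<Prod>p\<in>P. E p (hh p))"
    by (rule sum.reindex_bij_betw[OF bijP])
  also have "\<dots> = (\<Prod>p\<in>P. \<Sum>v\<in>X p. E p v)"
    by (rule prod_sum_PiE[symmetric]) (use finP orb in auto)
  also have "\<dots> = (\<Prod>p\<in>prime_factors n. sigma (ppart n p) (local_orbit n \<omega> r (x p) p) (y mod int (ppart n p)))"
    unfolding sigma_def E_def X_def P_def q_def by simp
  finally show ?thesis .
qed

end
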